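(* Let $m,n$ be natural numbers and let $F_{ij}=\int_{-1}^{1}P_{i-1}(\eta)\,\eta^{j-1}\,d\eta$. For each natural $k$ let $\mathbf f_{k,\bullet}=(F_{k1},F_{k2},\dots,F_{k,n+1})^T$, and let $\mathbf f'=(F_{1,m+1},F_{1,m+2},\dots,F_{1,m+n+1})^T$. Then $\mathbf f'$ is a linear combination of the vectors $\mathbf f_{\delta,\bullet},\mathbf f_{\delta+2,\bullet},\dots,\mathbf f_{m+1,\bullet}$, where $\delta=1$ if $m$ is even and $\delta=2$ if $m$ is odd.
   Context: $P_k$ denotes the Legendre polynomial of degree $k$; $F=(F_{ij})$ is the matrix of moments of the Legendre polynomials. *)

theory Defs
  imports "HOL-Analysis.Analysis" "HOL-Computational_Algebra.Polynomial"
begin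

fun legendre :: "nat \<Rightarrow> real poly" where
  "legendre 0 = 1"
| "legendre (Suc 0) = [:0, 1:]"
| "legendre (Suc (Suc k)) =
     smult (1 / real (k + 2))
       (smult (real (2 * k + 3)) ([:0, 1:] * legendre (Suc k)) - smult (real (k + 1)) (legendre k))"

definition legendre_moment :: "nat \<Rightarrow> nat \<Rightarrow> real" where
  "legendre_moment i j = integral {-1..1} (\<lambda>\<eta>::real. poly (legendre (i - 1)) \<eta> * \<eta> ^ (j - 1))"

end

theory Submission
  imports Defs
begin

definition Vsp :: "nat \<Rightarrow> real poly set" where
  "Vsp m = {p. \<exists>c. p = (\<Sum>i\<in>{i. i \<le> m \<and> even (m + i)}. smult (c i) (legendre i))}"

lemma fin_idx: "finite {i::nat. i \<le> m \<and> even (m + i)}"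
  by (rule finite_subset[of _ "{..m}"]) auto

lemma Vsp_zero: "0 \<in> Vsp m"
  unfolding Vsp_def by (rule CollectI, rule exI[of _ "\<lambda>_. 0"]) simp

lemma Vsp_add: "p \<in> Vsp m \<Longrightarrow> q \<in> Vsp m \<Longrightarrow> p + q \<in> Vsp m"
  unfolding Vsp_def
proof clarify
  fix c d
  show "\<exists>e. (\<Sum>i\<in>{i. i \<le> m \<and> even (m + i)}. smult (c i) (legendre i)) +
           (\<Sum>i\<in>{i. i \<le> m \<and> even (m + i)}. smult (d i) (legendre i)) =
           (\<Sum>i\<in>{i. i \<le> m \<and> even (m + i)}. smult (e i) (legendre i))"
    by (rule exI[of _ "\<lambda>i. c i + d i"]) (simp add: sum.distrib[symmetric] smult_add_left)
qed

lemma smult_sum_right: "smult a (\<Sum>i\<in>S. f i) = (\<Sum>i\<in>S. smult a (f i))"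
  by (induct S rule: infinite_finite_induct) (auto simp: smult_add_right)

lemma Vsp_smult: "p \<in> Vsp m \<Longrightarrow> smult a p \<in> Vsp m"
  unfolding Vsp_def
proof clarify
  fix c
  show "\<exists>e. smult a (\<Sum>i\<in>{i. i \<le> m \<and> even (m + i)}. smult (c i) (legendre i)) =
           (\<Sum>i\<in>{i. i \<le> m \<and> even (m + i)}. smult (e i) (legendre i))"
    by (rule exI[of _ "\<lambda>i. a * c i"]) (simp add: smult_sum_right)
qed

lemma Vsp_sum: "finite A \<Longrightarrow> (\<And>a. a \<in> A \<Longrightarrow> f a \<in> Vsp m) \<Longrightarrow> sum f A \<in> Vsp m"
  by (induction A rule: finite_induct) (auto intro: Vsp_zero Vsp_add)

lemma Vsp_leg: "k \<le> m \<Longrightarrow> even (m + k) \<Longrightarrow> legendre k \<in> Vsp m"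
  unfolding Vsp_def
proof (rule CollectI, rule exI[of _ "\<lambda>i. if i = k then 1 else 0"])
  assume "k \<le> m" "even (m + k)"
  then have "k \<in> {i. i \<le> m \<and> even (m + i)}" by simp
  then show "legendre k = (\<Sum>i\<in>{i. i \<le> m \<and> even (m + i)}. smult (if i = k then 1 else 0) (legendre i))"
    using fin_idx[of m] by (simp add: if_distrib[of "\<lambda>c. smult c _"] cong: if_cong)
qed

lemma x_leg: "k \<le> m \<Longrightarrow> even (m + k) \<Longrightarrow> [:0,1:] * legendre k \<in> Vsp (Suc m)"
proof (cases k)
  case 0
  assume "k \<le> m" "even (m + k)"
  then show ?thesis using 0 Vsp_leg[of 1 "Suc m"] by simp
next
  case (Suc j)
  assume h: "k \<le> m" "even (m + k)"
  have r: "legendre (Suc (Suc j)) = smult (1 / real (j + 2))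
       (smult (real (2 * j + 3)) ([:0, 1:] * legendre (Suc j)) - smult (real (j + 1)) (legendre j))"
    by simp
  have "smult (real (j+2)) (legendre (Suc (Suc j))) =
        smult (real (2 * j + 3)) ([:0, 1:] * legendre (Suc j)) - smult (real (j + 1)) (legendre j)"
    unfolding r by simp
  then have "smult (real (2 * j + 3)) ([:0, 1:] * legendre (Suc j)) =
        smult (real (j+2)) (legendre (Suc (Suc j))) + smult (real (j + 1)) (legendre j)"
    by (simp add: algebra_simps)
  then have "smult (1/real (2 * j + 3)) (smult (real (2 * j + 3)) ([:0, 1:] * legendre (Suc j))) =
        smult (1/real (2 * j + 3)) (smult (real (j+2)) (legendre (Suc (Suc j))) + smult (real (j + 1)) (legendre j))"
    by simp
  then have e: "[:0, 1:] * legendre (Suc j) =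
        smult (1/real (2 * j + 3)) (smult (real (j+2)) (legendre (Suc (Suc j))) + smult (real (j + 1)) (legendre j))"
    by (simp del: of_nat_add of_nat_mult)
  have "legendre (Suc (Suc j)) \<in> Vsp (Suc m)" using h Suc by (intro Vsp_leg) auto
  moreover have "legendre j \<in> Vsp (Suc m)" using h Suc by (intro Vsp_leg) auto
  ultimately show ?thesis unfolding Suc e by (intro Vsp_smult Vsp_add)
qed

lemma xpow: "[:0,1:] ^ m \<in> Vsp m"
proof (induction m)
  case 0
  then show ?case using Vsp_leg[of 0 0] by simp
next
  case (Suc m)
  then obtain c where c: "[:0,1:] ^ m = (\<Sum>i\<in>{i. i \<le> m \<and> even (m + i)}. smult (c i) (legendre i))"
    unfolding Vsp_def by blast
  have "[:0,1:] ^ Suc m = (\<Sum>i\<in>{i. i \<le> m \<and> even (m + i)}. smult (c i) ([:0,1:] * legendre i))"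
    by (simp add: c sum_distrib_left mult_smult_right)
  also have "\<dots> \<in> Vsp (Suc m)"
    by (intro Vsp_sum fin_idx Vsp_smult x_leg) auto
  finally show ?case .
qed

theorem lemma3:
  fixes m n :: nat
  defines "\<delta> \<equiv> (if even m then 1 else 2 :: nat)"
  shows "\<exists>c :: nat \<Rightarrow> real. \<forall>j \<in> {1..n+1}.
           legendre_moment 1 (m + j) =
             (\<Sum>k \<in> {k. \<delta> \<le> k \<and> k \<le> m + 1 \<and> even (k - \<delta>)}. c k * legendre_moment k j)"
proof -
  let ?I = "{i. i \<le> m \<and> even (m + i)}"
  obtain c where c: "[:0,1:] ^ m = (\<Sum>i\<in>?I. smult (c i) (legendre i))"
    using xpow[of m] unfolding Vsp_def by blast
  have set: "{k. \<delta> \<le> k \<and> k \<le> m + 1 \<and> even (k - \<delta>)} = Suc ` ?I"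
  proof (cases "even m")
    case True
    then show ?thesis unfolding \<delta>_def
      apply (auto simp: image_iff)
      subgoal for x by (rule exI[of _ "x - 1"]) auto
      done
  next
    case False
    then show ?thesis unfolding \<delta>_def
      apply (auto simp: image_iff)
      subgoal for x by (rule exI[of _ "x - 1"]) auto
      subgoal by presburger
      done
  qed
  show ?thesis
  proof (rule exI[of _ "\<lambda>k. c (k - 1)"], intro ballI)
    fix j assume j: "j \<in> {1..n+1}"
    have "legendre_moment 1 (m + j) = integral {-1..1} (\<lambda>x::real. x ^ m * x ^ (j - 1))"
      unfolding legendre_moment_def using j by (simp add: power_add[symmetric])
    also have "\<dots> = integral {-1..1} (\<lambda>x::real. (\<Sum>i\<in>?I. c i * (poly (legendre i) x * x ^ (j - 1))))"
    proof -
      have "\<And>x::real. x ^ m = poly ([:0,1:] ^ m) x" by (simp add: poly_power)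
      then have "\<And>x::real. x ^ m * x ^ (j - 1) = (\<Sum>i\<in>?I. c i * (poly (legendre i) x * x ^ (j - 1)))"
        unfolding c by (simp add: poly_sum sum_distrib_right mult.assoc)
      then show ?thesis by simp
    qed
    also have "\<dots> = (\<Sum>i\<in>?I. c i * integral {-1..1} (\<lambda>x::real. poly (legendre i) x * x ^ (j - 1)))"
      by (subst integral_sum) (auto intro!: integrable_continuous_interval continuous_intros fin_idx)
    also have "\<dots> = (\<Sum>i\<in>?I. c (Suc i - 1) * legendre_moment (Suc i) j)"
      unfolding legendre_moment_def by simp
    also have "\<dots> = (\<Sum>k\<in>Suc ` ?I. c (k - 1) * legendre_moment k j)"
      by (subst sum.reindex) auto
    finally show "legendre_moment 1 (m + j) =
       (\<Sum>k \<in> {k. \<delta> \<le> k \<and> k \<le> m + 1 \<and> even (k - \<delta>)}. c (k - 1) * legendre_moment k j)"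
      unfolding set .
  qed
qed

end
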